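(* For every integer $n\ge 1$, \[ |\mathfrak D^1_{2n}(2341,1423)|=\frac{1}{\sqrt{17}}\left(\left(\frac{3+\sqrt{17}}{2}\right)^n-\left(\frac{3-\sqrt{17}}{2}\right)^n\right)=\left[\frac{1}{\sqrt{17}}\left(\frac{3+\sqrt{17}}{2}\right)^n\right], \] where $[a]$ denotes the integer closest to $a$.
   Context: A Dumont permutation of the first kind of length $2n$ is a permutation $\pi\in\mathfrak S_{2n}$ such that for every $i=1,\dots,2n$: if $\pi(i)$ is even then $i<2n$ and $\pi(i)>\pi(i+1)$; if $\pi(i)$ is odd then $i=2n$ or $\pi(i)<\pi(i+1)$. $\mathfrak D^1_{2n}$ denotes the set of these. A permutation $\sigma$ contains a pattern $\tau\in\mathfrak S_k$ if some subsequence $(\sigma(i_1),\dots,\sigma(i_k))$, $i_1<\dots<i_k$, is order-isomorphic to $\tau$; otherwise $\sigma$ avoids $\tau$. $\mathfrak D^1_{2n}(T)$ denotes the set of permutations in $\mathfrak D^1_{2n}$ avoiding every pattern in $T$. *)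

theory Defs
  imports Complex_Main
begin

definition is_perm :: "nat \<Rightarrow> nat list \<Rightarrow> bool" where
  "is_perm m p \<longleftrightarrow> length p = m \<and> distinct p \<and> set p = {1..m}"

definition dumont1 :: "nat \<Rightarrow> nat list \<Rightarrow> bool" where
  "dumont1 n p \<longleftrightarrow> is_perm (2*n) p \<and>
     (\<forall>i < 2*n.
        (even (p!i) \<longrightarrow> i + 1 < 2*n \<and> p!i > p!(i+1)) \<and>
        (odd (p!i) \<longrightarrow> i + 1 = 2*n \<or> p!i < p!(i+1)))"

definition contains :: "nat list \<Rightarrow> nat list \<Rightarrow> bool" where
  "contains \<sigma> \<tau> \<longleftrightarrow> (\<exists>idx :: nat list.
      length idx = length \<tau> \<and> sorted_wrt (<) idx \<and> (\<forall>j < length idx. idx!j < length \<sigma>) \<and>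
      (\<forall>a < length \<tau>. \<forall>b < length \<tau>. (\<sigma>!(idx!a) < \<sigma>!(idx!b) \<longleftrightarrow> \<tau>!a < \<tau>!b)))"

definition avoids :: "nat list \<Rightarrow> nat list \<Rightarrow> bool" where
  "avoids \<sigma> \<tau> \<longleftrightarrow> \<not> contains \<sigma> \<tau>"

definition Dumont1_avoid :: "nat \<Rightarrow> nat list set \<Rightarrow> nat list set" where
  "Dumont1_avoid n T = {p. dumont1 n p \<and> (\<forall>\<tau>\<in>T. avoids p \<tau>)}"

end

theory Submission
  imports Defs "HOL-Library.Sublist"
begin


lemma subseq_map_nth:
  "sorted_wrt (<) idx \<Longrightarrow> (\<forall>j\<in>set idx. j < length \<sigma>) \<Longrightarrow> subseq (map ((!) \<sigma>) idx) \<sigma>"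
proof (induction \<sigma> arbitrary: idx)
  case Nil
  then show ?case by (cases idx) auto
next
  case (Cons y ys)
  show ?case
  proof (cases idx)
    case Nil then show ?thesis by simp
  next
    case (Cons h t)
    have tpos: "\<forall>x\<in>set t. 0 < x" using Cons \<open>sorted_wrt (<) idx\<close> by auto
    show ?thesis
    proof (cases "h = 0")
      case True
      define t' where "t' = map (\<lambda>x. x - 1) t"
      have "sorted_wrt (<) t" using Cons.prems Cons by simp
      then have "sorted_wrt (<) t'" unfolding t'_def sorted_wrt_map
        by (rule sorted_wrt_mono_rel[rotated]) (use tpos in auto)
      moreover have "\<forall>j\<in>set t'. j < length ys" unfolding t'_def using Cons.prems Cons tpos by auto
      ultimately have "subseq (map ((!) ys) t') ys" using Cons.IH by blast
      moreover have "map ((!) (y#ys)) idx = y # map ((!) ys) t'"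
        unfolding t'_def using Cons True tpos by (auto simp: nth_Cons')
      ultimately show ?thesis by simp
    next
      case False
      have ipos: "\<forall>x\<in>set idx. 0 < x" using tpos Cons False by auto
      define t' where "t' = map (\<lambda>x. x - 1) idx"
      have "sorted_wrt (<) t'" unfolding t'_def sorted_wrt_map
        by (rule sorted_wrt_mono_rel[rotated, OF Cons.prems(1)]) (use ipos in auto)
      moreover have "\<forall>j\<in>set t'. j < length ys" unfolding t'_def using Cons.prems ipos by auto
      ultimately have "subseq (map ((!) ys) t') ys" using Cons.IH by blast
      moreover have "map ((!) (y#ys)) idx = map ((!) ys) t'"
        unfolding t'_def using ipos by (auto simp: nth_Cons')
      ultimately show ?thesis by (metis list_emb.list_emb_Cons)
    qed
  qed
qed

lemma subseq_idx:
  "subseq s \<sigma> \<Longrightarrow> \<exists>idx. sorted_wrt (<) idx \<and> (\<forall>j\<in>set idx. j < length \<sigma>) \<and> s = map ((!) \<sigma>) idx"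
proof (induction rule: list_emb.induct)
  case (list_emb_Nil ys)
  then show ?case by (intro exI[of _ "[]"]) auto
next
  case (list_emb_Cons xs ys y)
  then obtain idx where "sorted_wrt (<) idx" "\<forall>j\<in>set idx. j < length ys" "xs = map ((!) ys) idx" by blast
  then show ?case by (intro exI[of _ "map Suc idx"]) (auto simp: sorted_wrt_map)
next
  case (list_emb_Cons2 x y xs ys)
  then obtain idx where "sorted_wrt (<) idx" "\<forall>j\<in>set idx. j < length ys" "xs = map ((!) ys) idx" by blast
  then show ?case using list_emb_Cons2 by (intro exI[of _ "0 # map Suc idx"]) (auto simp: sorted_wrt_map)
qed

lemma contains_subseq:
  "contains \<sigma> \<tau> \<longleftrightarrow> (\<exists>s. subseq s \<sigma> \<and> length s = length \<tau> \<and>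
      (\<forall>a < length \<tau>. \<forall>b < length \<tau>. (s!a < s!b \<longleftrightarrow> \<tau>!a < \<tau>!b)))"
proof
  assume "contains \<sigma> \<tau>"
  then obtain idx where h: "length idx = length \<tau>" "sorted_wrt (<) idx" "\<forall>j < length idx. idx!j < length \<sigma>"
      "\<forall>a < length \<tau>. \<forall>b < length \<tau>. (\<sigma>!(idx!a) < \<sigma>!(idx!b) \<longleftrightarrow> \<tau>!a < \<tau>!b)"
    unfolding contains_def by blast
  have "subseq (map ((!) \<sigma>) idx) \<sigma>" using h by (intro subseq_map_nth) (auto simp: in_set_conv_nth)
  then show "\<exists>s. subseq s \<sigma> \<and> length s = length \<tau> \<and>
      (\<forall>a < length \<tau>. \<forall>b < length \<tau>. (s!a < s!b \<longleftrightarrow> \<tau>!a < \<tau>!b))"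
    using h by (intro exI[of _ "map ((!) \<sigma>) idx"]) auto
next
  assume "\<exists>s. subseq s \<sigma> \<and> length s = length \<tau> \<and>
      (\<forall>a < length \<tau>. \<forall>b < length \<tau>. (s!a < s!b \<longleftrightarrow> \<tau>!a < \<tau>!b))"
  then obtain s where s: "subseq s \<sigma>" "length s = length \<tau>"
     "\<forall>a < length \<tau>. \<forall>b < length \<tau>. (s!a < s!b \<longleftrightarrow> \<tau>!a < \<tau>!b)" by blast
  from subseq_idx[OF s(1)] obtain idx where i: "sorted_wrt (<) idx" "\<forall>j\<in>set idx. j < length \<sigma>" "s = map ((!) \<sigma>) idx" by blast
  show "contains \<sigma> \<tau>" unfolding contains_def
    using s i by (intro exI[of _ idx]) auto
qed

lemma all4: "(\<forall>x<(4::nat). P x) \<longleftrightarrow> P 0 \<and> P 1 \<and> P 2 \<and> P 3"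
  by (auto simp: less_Suc_eq numeral_eq_Suc)

lemma all4s: "(\<forall>x<Suc (Suc (Suc (Suc 0))). P x) \<longleftrightarrow> P 0 \<and> P (Suc 0) \<and> P (Suc (Suc 0)) \<and> P (Suc (Suc (Suc 0)))"
  by (auto simp: less_Suc_eq)

definition P1 :: "nat list \<Rightarrow> bool" where
  "P1 \<sigma> \<longleftrightarrow> (\<exists>a b c d. subseq [a,b,c,d] \<sigma> \<and> d < a \<and> a < b \<and> b < c)"
definition P2 :: "nat list \<Rightarrow> bool" where
  "P2 \<sigma> \<longleftrightarrow> (\<exists>a b c d. subseq [a,b,c,d] \<sigma> \<and> a < c \<and> c < d \<and> d < b)"

lemma len4: "length s = 4 \<longleftrightarrow> (\<exists>a b c d. s = [a,b,c,d])"
  by (auto simp: numeral_eq_Suc length_Suc_conv)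

lemma contains_P1: "contains \<sigma> [2,3,4,1] \<longleftrightarrow> P1 \<sigma>"
proof
  assume "contains \<sigma> [2,3,4,1]"
  then obtain s where s: "subseq s \<sigma>" "length s = length [2,3,4,1::nat]"
    "\<forall>a<length [2,3,4,1::nat]. \<forall>b<length [2,3,4,1::nat]. (s!a < s!b \<longleftrightarrow> [2,3,4,1::nat]!a < [2,3,4,1::nat]!b)"
    using contains_subseq[THEN iffD1, OF \<open>contains \<sigma> [2,3,4,1]\<close>] by (elim exE conjE)
  have "length s = 4" using s(2) by simp
  then have "\<exists>a b c d. s = [a,b,c,d]" by (simp only: len4)
  then obtain a b c d where e: "s = [a,b,c,d]" by (elim exE)
  have "d < a" using s(3)[rule_format, of 3 0] e by simp
  moreover have "a < b" using s(3)[rule_format, of 0 1] e by simp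
  moreover have "b < c" using s(3)[rule_format, of 1 2] e by simp
  ultimately show "P1 \<sigma>" unfolding P1_def using s(1) e by blast
next
  assume "P1 \<sigma>"
  then obtain a b c d where h: "subseq [a,b,c,d] \<sigma>" "d < a" "a < b" "b < c" unfolding P1_def by blast
  have "\<forall>x<length [2,3,4,1::nat]. \<forall>y<length [2,3,4,1::nat]. ([a,b,c,d]!x < [a,b,c,d]!y \<longleftrightarrow> [2,3,4,1::nat]!x < [2,3,4,1::nat]!y)"
    using h(2-4) by (simp add: all4s)
  then show "contains \<sigma> [2,3,4,1]" unfolding contains_subseq
    using h(1) by (intro exI[of _ "[a,b,c,d]"]) simp
qed

lemma contains_P2: "contains \<sigma> [1,4,2,3] \<longleftrightarrow> P2 \<sigma>"
proof
  assume "contains \<sigma> [1,4,2,3]"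
  then obtain s where s: "subseq s \<sigma>" "length s = length [1,4,2,3::nat]"
    "\<forall>a<length [1,4,2,3::nat]. \<forall>b<length [1,4,2,3::nat]. (s!a < s!b \<longleftrightarrow> [1,4,2,3::nat]!a < [1,4,2,3::nat]!b)"
    using contains_subseq[THEN iffD1, OF \<open>contains \<sigma> [1,4,2,3]\<close>] by (elim exE conjE)
  have "length s = 4" using s(2) by simp
  then have "\<exists>a b c d. s = [a,b,c,d]" by (simp only: len4)
  then obtain a b c d where e: "s = [a,b,c,d]" by (elim exE)
  have "a < c" using s(3)[rule_format, of 0 2] e by simp
  moreover have "c < d" using s(3)[rule_format, of 2 3] e by simp
  moreover have "d < b" using s(3)[rule_format, of 3 1] e by simp
  ultimately show "P2 \<sigma>" unfolding P2_def using s(1) e by blast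
next
  assume "P2 \<sigma>"
  then obtain a b c d where h: "subseq [a,b,c,d] \<sigma>" "a < c" "c < d" "d < b" unfolding P2_def by blast
  have "\<forall>x<length [1,4,2,3::nat]. \<forall>y<length [1,4,2,3::nat]. ([a,b,c,d]!x < [a,b,c,d]!y \<longleftrightarrow> [1,4,2,3::nat]!x < [1,4,2,3::nat]!y)"
    using h(2-4) by (simp add: all4s)
  then show "contains \<sigma> [1,4,2,3]" unfolding contains_subseq
    using h(1) by (intro exI[of _ "[a,b,c,d]"]) simp
qed

fun dk :: "nat list \<Rightarrow> bool" where
  "dk [] = True"
| "dk [x] = odd x"
| "dk (x#y#zs) = ((if even x then y < x else x < y) \<and> dk (y#zs))"

lemma dk_nth: "dk p \<longleftrightarrow> (\<forall>i<length p. (even (p!i) \<longrightarrow> i+1 < length p \<and> p!i > p!(i+1)) \<and>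
        (odd (p!i) \<longrightarrow> i+1 = length p \<or> p!i < p!(i+1)))"
proof (induction p rule: dk.induct)
  case (3 x y zs)
  have e: "(\<forall>i<length (x#y#zs). Q i) \<longleftrightarrow> Q 0 \<and> (\<forall>i<length (y#zs). Q (Suc i))" for Q
    by (simp only: length_Cons All_less_Suc2)
  have d: "dk (x#y#zs) = ((if even x then y < x else x < y) \<and> dk (y#zs))" by simp
  show ?case unfolding e d 3 by simp
next
  case (2 x)
  show ?case by simp
qed simp

lemma dk_ConsD: "dk (x#xs) \<Longrightarrow> dk xs"
  by (cases xs) (simp_all split: if_splits)

lemma dk_append: "xs \<noteq> [] \<Longrightarrow> last xs < y \<Longrightarrow> dk (xs @ y # ys) \<longleftrightarrow> dk xs \<and> dk (y # ys)"
proof (induction xs rule: dk.induct)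
  case (2 x)
  then show ?case by auto
next
  case (3 x y zs)
  then show ?case by auto
qed auto

definition good :: "nat \<Rightarrow> nat list \<Rightarrow> bool" where
  "good m p \<longleftrightarrow> length p = m \<and> distinct p \<and> set p = {1..m} \<and> dk p \<and> \<not> P1 p \<and> \<not> P2 p"

lemma dumont1_dk: "dumont1 n p \<longleftrightarrow> is_perm (2*n) p \<and> dk p"
  unfolding dumont1_def dk_nth is_perm_def by auto

lemma ball2: "(\<forall>x\<in>{a,b}. P x) \<longleftrightarrow> P a \<and> P b" by simp

lemma D_good: "Dumont1_avoid n {[2,3,4,1], [1,4,2,3]} = {p. good (2*n) p}"
  unfolding Dumont1_avoid_def good_def dumont1_dk ball2 avoids_def is_perm_def contains_P1 contains_P2
  by auto

lemma subseq_Cons_right: "subseq s (x#xs) \<longleftrightarrow> subseq s xs \<or> (\<exists>t. s = x#t \<and> subseq t xs)"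
proof (cases s)
  case (Cons a t)
  show ?thesis unfolding Cons by (cases "a = x") (auto dest: subseq_Cons')
qed simp

lemma subseq3: "subseq s (pre @ mid @ post) \<Longrightarrow>
   \<exists>s1 s2 s3. s = s1 @ s2 @ s3 \<and> subseq s1 pre \<and> subseq s2 mid \<and> subseq s3 post"
  by (auto simp: subseq_append_iff)

lemma subseq_setD: "subseq s xs \<Longrightarrow> set s \<subseteq> set xs"
  by (induction rule: list_emb.induct) auto

lemma P1_mono: "P1 s \<Longrightarrow> subseq s t \<Longrightarrow> P1 t"
  unfolding P1_def by (meson subseq_order.order_trans)
lemma P2_mono: "P2 s \<Longrightarrow> subseq s t \<Longrightarrow> P2 t"
  unfolding P2_def by (meson subseq_order.order_trans)




lemma sc1: "subseq (a#s) (x#xs) \<longleftrightarrow> (a = x \<and> subseq s xs) \<or> subseq (a#s) xs"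
  by (cases "a = x") (auto dest: subseq_Cons')

lemma sub1: "subseq t [y] \<longleftrightarrow> t = [] \<or> t = [y]"
  by (cases t) (auto simp: sc1)

lemma sub_snoc: "subseq (s @ [a]) (zs @ [y]) \<longleftrightarrow> (a = y \<and> subseq s zs) \<or> subseq (s @ [a]) zs"
proof
  assume "subseq (s @ [a]) (zs @ [y])"
  then obtain x1 x2 where h: "s @ [a] = x1 @ x2" "subseq x1 zs" "subseq x2 [y]"
    by (elim subseq_appendE)
  from h(3) have "x2 = [] \<or> x2 = [y]" by (simp add: sub1)
  then show "(a = y \<and> subseq s zs) \<or> subseq (s @ [a]) zs"
  proof
    assume "x2 = []" then show ?thesis using h by simp
  next
    assume "x2 = [y]" then show ?thesis using h by simp
  qed
next
  assume "(a = y \<and> subseq s zs) \<or> subseq (s @ [a]) zs"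
  then show "subseq (s @ [a]) (zs @ [y])"
    by (elim disjE) (auto intro: subseq_rev_drop_many)
qed

lemma sn4: "subseq [a,b,c,d] (zs @ [y]) \<longleftrightarrow> subseq [a,b,c,d] zs \<or> (d = y \<and> subseq [a,b,c] zs)"
  using sub_snoc[of "[a,b,c]" d zs y] by auto
lemma sn3: "subseq [a,b,c] (zs @ [y]) \<longleftrightarrow> subseq [a,b,c] zs \<or> (c = y \<and> subseq [a,b] zs)"
  using sub_snoc[of "[a,b]" c zs y] by auto
lemma sn2: "subseq [a,b] (zs @ [y]) \<longleftrightarrow> subseq [a,b] zs \<or> (b = y \<and> subseq [a] zs)"
  using sub_snoc[of "[a]" b zs y] by auto
lemma sn1: "subseq [a] (zs @ [y]) \<longleftrightarrow> subseq [a] zs \<or> a = y"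
  using sub_snoc[of "[]" a zs y] by auto

lemma subseq_hdD: assumes "subseq (x#xs) r" shows "x \<in> set r \<and> subseq xs r"
proof -
  have "set (x#xs) \<subseteq> set r" by (rule subseq_setD[OF assms])
  then show ?thesis using subseq_Cons'[OF assms] by simp
qed




lemma good_D: assumes "good k q"
  shows "length q = k" "distinct q" "set q = {1..k}" "dk q" "\<not> P1 q" "\<not> P2 q"
  using assms unfolding good_def by auto

lemma f1_good: assumes g: "good k q" and m: "even m" "m = k + 2"
  shows "good m (q @ [m, m-1])"
proof -
  note q = good_D[OF g]
  have vals: "\<forall>x\<in>set q. x \<le> k" using q(3) by auto
  have len: "length (q @ [m,m-1]) = m" using q(1) m by simp
  have dist: "distinct (q @ [m, m-1])" using q(2) vals m by auto
  have st: "set (q @ [m,m-1]) = {1..m}" using q(3) m by auto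
  have dkk: "dk (q @ [m,m-1])"
  proof (cases "q = []")
    case True then show ?thesis using m by auto
  next
    case False
    then have "last q \<in> set q" by simp
    then have "last q < m" using vals m by auto
    then show ?thesis using dk_append[OF False, of m "[m-1]"] q(4) m by auto
  qed
  have n1: "\<not> P1 (q @ [m,m-1])"
  proof
    assume "P1 (q @ [m,m-1])"
    then obtain a b c d where h: "subseq [a,b,c,d] ((q @ [m]) @ [m-1])" "d < a" "a < b" "b < c"
      unfolding P1_def by auto
    have "\<not> subseq [a,b,c,d] q" using q(5) h(2-4) unfolding P1_def by blast
    then show False using h vals m by (auto simp only: sn4 sn3 sn2 sn1 dest!: subseq_hdD)
  qed
  have n2: "\<not> P2 (q @ [m,m-1])"
  proof
    assume "P2 (q @ [m,m-1])"
    then obtain a b c d where h: "subseq [a,b,c,d] ((q @ [m]) @ [m-1])" "a < c" "c < d" "d < b"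
      unfolding P2_def by auto
    have "\<not> subseq [a,b,c,d] q" using q(6) h(2-4) unfolding P2_def by blast
    then show False using h vals m by (auto simp only: sn4 sn3 sn2 sn1 dest!: subseq_hdD)
  qed
  show ?thesis unfolding good_def using len dist st dkk n1 n2 by blast
qed

lemma f2_good: assumes g: "good k q" and m: "even m" "m = k + 2" and ne: "q \<noteq> []"
  shows "good m ([m-1, m] @ q)"
proof -
  note q = good_D[OF g]
  have vals: "\<forall>x\<in>set q. x \<le> k" using q(3) by auto
  have len: "length ([m-1, m] @ q) = m" using q(1) m by simp
  have dist: "distinct ([m-1, m] @ q)" using q(2) vals m by auto
  have st: "set ([m-1, m] @ q) = {1..m}" using q(3) m by auto
  obtain y ys where yq: "q = y # ys" using ne by (cases q) auto
  have "y \<le> k" using vals yq by simp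
  then have dkk: "dk ([m-1, m] @ q)" using q(4) m yq by auto
  have n1: "\<not> P1 ([m-1, m] @ q)"
  proof
    assume "P1 ([m-1, m] @ q)"
    then obtain a b c d where h: "subseq [a,b,c,d] ((m-1) # m # q)" "d < a" "a < b" "b < c"
      unfolding P1_def by auto
    have "\<not> subseq [a,b,c,d] q" using q(5) h(2-4) unfolding P1_def by blast
    then show False using h vals m by (auto simp only: sc1 dest!: subseq_hdD)
  qed
  have n2: "\<not> P2 ([m-1, m] @ q)"
  proof
    assume "P2 ([m-1, m] @ q)"
    then obtain a b c d where h: "subseq [a,b,c,d] ((m-1) # m # q)" "a < c" "c < d" "d < b"
      unfolding P2_def by auto
    have "\<not> subseq [a,b,c,d] q" using q(6) h(2-4) unfolding P2_def by blast
    then show False using h vals m by (auto simp only: sc1 dest!: subseq_hdD)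
  qed
  show ?thesis unfolding good_def using len dist st dkk n1 n2 by blast
qed

lemma f3_good: assumes g: "good k q" and m: "even m" "m = k + 2" and ne: "q \<noteq> []"
  shows "good m (m # q @ [m-1])"
proof -
  note q = good_D[OF g]
  have vals: "\<forall>x\<in>set q. x \<le> k" using q(3) by auto
  have len: "length (m # q @ [m-1]) = m" using q(1) m by simp
  have dist: "distinct (m # q @ [m-1])" using q(2) vals m by auto
  have st: "set (m # q @ [m-1]) = {1..m}" using q(3) m by auto
  obtain y ys where yq: "q = y # ys" using ne by (cases q) auto
  have "y \<le> k" using vals yq by simp
  have "last q \<in> set q" using ne by simp
  then have "last q < m - 1" using vals m by auto
  then have "dk (q @ [m-1])" using dk_append[OF ne, of "m-1" "[]"] q(4) m by auto
  then have dkk: "dk (m # q @ [m-1])" using \<open>y \<le> k\<close> m yq by auto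
  have n1: "\<not> P1 (m # q @ [m-1])"
  proof
    assume "P1 (m # q @ [m-1])"
    then obtain a b c d where h: "subseq [a,b,c,d] (m # (q @ [m-1]))" "d < a" "a < b" "b < c"
      unfolding P1_def by auto
    have "\<not> subseq [a,b,c,d] q" using q(5) h(2-4) unfolding P1_def by blast
    then show False using h vals m by (auto simp only: sc1 sn4 sn3 sn2 sn1 dest!: subseq_hdD)
  qed
  have n2: "\<not> P2 (m # q @ [m-1])"
  proof
    assume "P2 (m # q @ [m-1])"
    then obtain a b c d where h: "subseq [a,b,c,d] (m # (q @ [m-1]))" "a < c" "c < d" "d < b"
      unfolding P2_def by auto
    have "\<not> subseq [a,b,c,d] q" using q(6) h(2-4) unfolding P2_def by blast
    then show False using h vals m by (auto simp only: sc1 sn4 sn3 sn2 sn1 dest!: subseq_hdD)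
  qed
  show ?thesis unfolding good_def using len dist st dkk n1 n2 by blast
qed

lemma par: fixes m :: nat assumes "even m" "m \<ge> 4" shows "odd (m-1)" "even (m-2)" "odd (m-3)"
  using assms by presburger+

lemma g1_good: assumes g: "good k r" and m: "even m" "m = k + 4" and ne: "r \<noteq> []"
  shows "good m (r @ [m-1, m, m-2, m-3])"
proof -
  note q = good_D[OF g]
  note pm = par[OF m(1)]
  have vals: "\<forall>x\<in>set r. x \<le> k" using q(3) by auto
  have len: "length (r @ [m-1, m, m-2, m-3]) = m" using q(1) m by simp
  have dist: "distinct (r @ [m-1, m, m-2, m-3])" using q(2) vals m by auto
  have st: "set (r @ [m-1, m, m-2, m-3]) = {1..m}" using q(3) m by auto
  have "last r \<in> set r" using ne by simp
  then have "last r < m - 1" using vals m by auto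
  then have dkk: "dk (r @ [m-1, m, m-2, m-3])" using dk_append[OF ne, of "m-1" "[m, m-2, m-3]"] q(4) m pm by auto
  have e: "r @ [m-1, m, m-2, m-3] = (((r @ [m-1]) @ [m]) @ [m-2]) @ [m-3]" by simp
  have n1: "\<not> P1 (r @ [m-1, m, m-2, m-3])"
  proof
    assume "P1 (r @ [m-1, m, m-2, m-3])"
    then obtain a b c d where h: "subseq [a,b,c,d] ((((r @ [m-1]) @ [m]) @ [m-2]) @ [m-3])" "d < a" "a < b" "b < c"
      unfolding P1_def e by auto
    have "\<not> subseq [a,b,c,d] r" using q(5) h(2-4) unfolding P1_def by blast
    then show False using h vals m by (auto simp only: sc1 sn4 sn3 sn2 sn1 dest!: subseq_hdD)
  qed
  have n2: "\<not> P2 (r @ [m-1, m, m-2, m-3])"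
  proof
    assume "P2 (r @ [m-1, m, m-2, m-3])"
    then obtain a b c d where h: "subseq [a,b,c,d] ((((r @ [m-1]) @ [m]) @ [m-2]) @ [m-3])" "a < c" "c < d" "d < b"
      unfolding P2_def e by auto
    have "\<not> subseq [a,b,c,d] r" using q(6) h(2-4) unfolding P2_def by blast
    then show False using h vals m by (auto simp only: sc1 sn4 sn3 sn2 sn1 dest!: subseq_hdD)
  qed
  show ?thesis unfolding good_def using len dist st dkk n1 n2 by blast
qed

lemma g2_good: assumes g: "good k r" and m: "even m" "m = k + 4" and ne: "r \<noteq> []"
  shows "good m ([m-2, m-3, m] @ r @ [m-1])"
proof -
  note q = good_D[OF g]
  note pm = par[OF m(1)]
  have vals: "\<forall>x\<in>set r. x \<le> k" using q(3) by auto
  have len: "length ([m-2, m-3, m] @ r @ [m-1]) = m" using q(1) m by simp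
  have dist: "distinct ([m-2, m-3, m] @ r @ [m-1])" using q(2) vals m by auto
  have st: "set ([m-2, m-3, m] @ r @ [m-1]) = {1..m}" using q(3) m by auto
  obtain y ys where yq: "r = y # ys" using ne by (cases r) auto
  have "y \<le> k" using vals yq by simp
  have "last r \<in> set r" using ne by simp
  then have "last r < m - 1" using vals m by auto
  then have "dk (r @ [m-1])" using dk_append[OF ne, of "m-1" "[]"] q(4) m pm by auto
  then have dkk: "dk ([m-2, m-3, m] @ r @ [m-1])" using \<open>y \<le> k\<close> m yq pm by auto
  have n1: "\<not> P1 ([m-2, m-3, m] @ r @ [m-1])"
  proof
    assume "P1 ([m-2, m-3, m] @ r @ [m-1])"
    then obtain a b c d where h: "subseq [a,b,c,d] ((m-2) # (m-3) # m # (r @ [m-1]))" "d < a" "a < b" "b < c"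
      unfolding P1_def by auto
    have "\<not> subseq [a,b,c,d] r" using q(5) h(2-4) unfolding P1_def by blast
    then show False using h vals m by (auto simp only: sc1 sn4 sn3 sn2 sn1 dest!: subseq_hdD)
  qed
  have n2: "\<not> P2 ([m-2, m-3, m] @ r @ [m-1])"
  proof
    assume "P2 ([m-2, m-3, m] @ r @ [m-1])"
    then obtain a b c d where h: "subseq [a,b,c,d] ((m-2) # (m-3) # m # (r @ [m-1]))" "a < c" "c < d" "d < b"
      unfolding P2_def by auto
    have "\<not> subseq [a,b,c,d] r" using q(6) h(2-4) unfolding P2_def by blast
    then show False using h vals m by (auto simp only: sc1 sn4 sn3 sn2 sn1 dest!: subseq_hdD)
  qed
  show ?thesis unfolding good_def using len dist st dkk n1 n2 by blast
qed



lemma comp_good: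
  assumes "length p = m" "distinct p" "set p = {1..m}" "\<not> P1 p" "\<not> P2 p"
    "p = pre @ c @ post" "set pre \<union> set post = {k<..m}" "k \<le> m" "dk c"
  shows "good k c"
proof -
  have dc: "distinct c" using assms(2,6) by simp
  have disj: "set c \<inter> (set pre \<union> set post) = {}" using assms(2,6) by auto
  have "set p = set pre \<union> set c \<union> set post" using assms(6) by auto
  then have e1: "set c = set p - (set pre \<union> set post)" using disj by blast
  have e2: "{1..m} - {k<..m} = {1..k}" using assms(8) by auto
  have sc: "set c = {1..k}" using e1 e2 assms(3,7) by simp
  have lc: "length c = k" using distinct_card[OF dc] sc by simp
  have sub: "subseq c p"
  proof -
    have "subseq c (c @ post)" by (rule subseq_rev_drop_many) simp
    then show ?thesis unfolding assms(6) by (rule list_emb_append2)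
  qed
  have "\<not> P1 c" using P1_mono[OF _ sub] assms(4) by blast
  moreover have "\<not> P2 c" using P2_mono[OF _ sub] assms(5) by blast
  ultimately show ?thesis unfolding good_def using dc sc lc assms(9) by blast
qed

lemma occ4: assumes "i < j" "j < k" "k < l" "l < length p"
  shows "subseq [p!i, p!j, p!k, p!l] p"
proof -
  have "subseq (map ((!) p) [i,j,k,l]) p"
    by (rule subseq_map_nth) (use assms in auto)
  then show ?thesis by simp
qed




lemma dk_prefix: assumes "dk (xs @ y # ys)" "\<forall>x\<in>set xs. x < y" shows "dk xs"
proof (cases "xs = []")
  case False
  then have "last xs < y" using assms(2) by simp
  then show ?thesis using dk_append[OF False] assms(1) by simp
qed simp

lemma dk_suffix: "dk (xs @ ys) \<Longrightarrow> dk ys"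
  by (induction xs) (auto dest: dk_ConsD)

lemma lt_helper:
  fixes m v :: nat
  assumes "distinct (pre @ c @ post)" "\<forall>x\<in>set (pre @ c @ post). x \<le> m" "{v..m} \<subseteq> set pre \<union> set post"
  shows "\<forall>x\<in>set c. x < v"
proof
  fix x assume x: "x \<in> set c"
  have "x \<notin> set pre \<union> set post" using assms(1) x by auto
  then have "x \<notin> {v..m}" using assms(3) by blast
  moreover have "x \<le> m" using assms(2) x by simp
  ultimately show "x < v" by auto
qed

lemma forward:
  fixes m :: nat
  assumes gp: "good m p" and me: "even m" and m2: "m \<ge> 2"
  shows "p \<in> (\<lambda>q. q @ [m, m-1]) ` {q. good (m-2) q}
       \<union> (\<lambda>q. [m-1, m] @ q) ` {q. good (m-2) q \<and> q \<noteq> []}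
       \<union> (\<lambda>q. m # q @ [m-1]) ` {q. good (m-2) q \<and> q \<noteq> []}
       \<union> (\<lambda>r. r @ [m-1, m, m-2, m-3]) ` {r. good (m-4) r \<and> r \<noteq> []}
       \<union> (\<lambda>r. [m-2, m-3, m] @ r @ [m-1]) ` {r. good (m-4) r \<and> r \<noteq> []}"
proof -
  note g = good_D[OF gp]
  have L: "length p = m" using g by simp
  have DK: "\<And>t. t < m \<Longrightarrow> (even (p!t) \<longrightarrow> t+1 < m \<and> p!(t+1) < p!t) \<and> (odd (p!t) \<longrightarrow> t+1 = m \<or> p!t < p!(t+1))"
    using g(4) L unfolding dk_nth by auto
  have V: "\<And>t. t < m \<Longrightarrow> 1 \<le> p!t \<and> p!t \<le> m"
  proof -
    fix t assume "t < m" then have "p!t \<in> set p" using L by simp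
    then show "1 \<le> p!t \<and> p!t \<le> m" using g(3) by auto
  qed
  have INJ: "\<And>s t. s < m \<Longrightarrow> t < m \<Longrightarrow> p!s = p!t \<Longrightarrow> s = t"
    using g(2) L nth_eq_iff_index_eq by metis
  have EX: "\<And>v. 1 \<le> v \<Longrightarrow> v \<le> m \<Longrightarrow> \<exists>t<m. p!t = v"
  proof -
    fix v assume "1 \<le> v" "v \<le> m" then have "v \<in> set p" using g(3) by auto
    then show "\<exists>t<m. p!t = v" using L by (auto simp: in_set_conv_nth)
  qed
  have N1: "\<And>i j k l. i<j \<Longrightarrow> j<k \<Longrightarrow> k<l \<Longrightarrow> l<m \<Longrightarrow> p!l < p!i \<Longrightarrow> p!i < p!j \<Longrightarrow> p!j < p!k \<Longrightarrow> False"
  proof -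
    fix i j k l assume h: "i<j" "j<k" "k<l" "l<m" "p!l < p!i" "p!i < p!j" "p!j < p!k"
    have "subseq [p!i, p!j, p!k, p!l] p" using occ4[of i j k l p] h L by simp
    then have "P1 p" unfolding P1_def using h(5-7) by blast
    then show False using g(5) by simp
  qed
  have N2: "\<And>i j k l. i<j \<Longrightarrow> j<k \<Longrightarrow> k<l \<Longrightarrow> l<m \<Longrightarrow> p!i < p!k \<Longrightarrow> p!k < p!l \<Longrightarrow> p!l < p!j \<Longrightarrow> False"
  proof -
    fix i j k l assume h: "i<j" "j<k" "k<l" "l<m" "p!i < p!k" "p!k < p!l" "p!l < p!j"
    have "subseq [p!i, p!j, p!k, p!l] p" using occ4[of i j k l p] h L by simp
    then have "P2 p" unfolding P2_def using h(5-7) by blast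
    then show False using g(6) by simp
  qed
  have pm1: "odd (m-1)" using me m2 by presburger
  have "\<exists>t<m. p!t = m-1" using EX[of "m-1"] m2 by simp
  then obtain i where i: "i < m" "p!i = m-1" by blast
  have "\<exists>t<m. p!t = m" using EX[of m] m2 by simp
  then obtain j where j: "j < m" "p!j = m" by blast
  have ij: "i \<noteq> j" using i j m2 by auto
  have NE: "p!s \<noteq> p!t" if "s < m" "t < m" "s \<noteq> t" for s t
    using INJ[OF that(1,2)] that(3) by blast
  have NEm: "p!s \<noteq> m" if "s < m" "s \<noteq> j" for s
    using INJ[OF that(1) j(1)] that(2) j(2) by auto
  have NEm1: "p!s \<noteq> m-1" if "s < m" "s \<noteq> i" for s
    using INJ[OF that(1) i(1)] that(2) i(2) by auto
  have j1: "j+1 < m" using DK[OF j(1)] j(2) me by auto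
  let ?A = "(\<lambda>q. q @ [m, m-1]) ` {q. good (m-2) q}"
  let ?B = "(\<lambda>q. [m-1, m] @ q) ` {q. good (m-2) q \<and> q \<noteq> []}"
  let ?C = "(\<lambda>q. m # q @ [m-1]) ` {q. good (m-2) q \<and> q \<noteq> []}"
  let ?D = "(\<lambda>r. r @ [m-1, m, m-2, m-3]) ` {r. good (m-4) r \<and> r \<noteq> []}"
  let ?E = "(\<lambda>r. [m-2, m-3, m] @ r @ [m-1]) ` {r. good (m-4) r \<and> r \<noteq> []}"
  have valsp: "\<forall>x\<in>set p. x \<le> m" using g(3) by auto
  have s2: "{m-1..m} = {m-1, m}" using m2 by auto
  show ?thesis
  proof (cases "i + 1 = m")
    case iT: True
    have pml: "p!(m-1) = m-1" using i iT by (metis add_diff_cancel_right')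
    show ?thesis
    proof (cases "j = m-2")
      case jT: True
      define q where "q = take (m-2) p"
      have pe: "p = q @ [m, m-1]"
      proof (rule nth_equalityI)
        show "length p = length (q @ [m, m-1])" using L m2 unfolding q_def by simp
        fix t assume "t < length p"
        then have "t < m-2 \<or> t = m-2 \<or> t = m-1" using L by arith
        then show "p!t = (q @ [m, m-1])!t"
          apply (elim disjE) using L m2 i j jT iT pml unfolding q_def by (auto simp: nth_append)
      qed
      have "\<forall>x\<in>set q. x < m-1"
        by (rule lt_helper[of "[]" q "[m, m-1]" m]) (use g(2) pe in simp, use valsp pe in simp, unfold s2, auto)
      then have "\<forall>x\<in>set q. x < m" by auto
      then have "dk q" using dk_prefix[of q m "[m-1]"] g(4) pe by simp
      have "good (m-2) q"
        by (rule comp_good[OF L g(2) g(3) g(5) g(6), of "[]" q "[m, m-1]"]) (use pe m2 \<open>dk q\<close> in auto)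
      then have "p \<in> ?A" using pe by blast
      then show ?thesis by blast
    next
      case jF: False
      show ?thesis
      proof (cases "j = 0")
        case j0: True
        define q where "q = take (m-2) (drop 1 p)"
        have pe: "p = m # q @ [m-1]"
        proof (rule nth_equalityI)
          show "length p = length (m # q @ [m-1])" using L m2 j1 j0 unfolding q_def by simp
          fix t assume "t < length p"
          then have "t = 0 \<or> (0 < t \<and> t < m-1) \<or> t = m-1" using L by arith
          then show "p!t = (m # q @ [m-1])!t"
            apply (elim disjE) using L m2 i j j0 iT j1 pml unfolding q_def by (auto simp: nth_append nth_Cons')
        qed
        have "\<forall>x\<in>set q. x < m-1"
          by (rule lt_helper[of "[m]" q "[m-1]" m]) (use g(2) pe in simp, use valsp pe in simp, unfold s2, auto)
        moreover have "dk (q @ [m-1])" using dk_suffix[of "[m]" "q @ [m-1]"] g(4) pe by simp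
        ultimately have "dk q" using dk_prefix[of q "m-1" "[]"] by simp
        have gq: "good (m-2) q"
          by (rule comp_good[OF L g(2) g(3) g(5) g(6), of "[m]" q "[m-1]"]) (use pe m2 \<open>dk q\<close> in auto)
        have "q \<noteq> []" using L pe j1 j0 jF by auto
        then have "p \<in> ?C" using pe gq by blast
        then show ?thesis by blast
      next
        case jF0: False
        have jl: "0 < j" "j < m - 2" using jF jF0 j1 by auto
        have a: "\<And>u v. u < j \<Longrightarrow> j < v \<Longrightarrow> v < m-1 \<Longrightarrow> p!v < p!u"
        proof (rule ccontr)
          fix u v assume h: "u < j" "j < v" "v < m-1" "\<not> p!v < p!u"
          have "p!u \<noteq> p!v" by (rule NE) (use h jl in linarith)+
          then have "p!u < p!v" using h by simp
          have "p!v \<noteq> m" by (rule NEm) (use h jl in linarith)+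
          moreover have "p!v \<noteq> m-1" by (rule NEm1) (use h iT in linarith)+
          ultimately have "p!v < m-1" using V[of v, OF order.strict_trans2[OF h(3) diff_le_self]] by auto
          then show False using N2[of u j v "m-1"] h \<open>p!u < p!v\<close> i iT j m2 by auto
        qed
        have b: "\<And>u u'. u < u' \<Longrightarrow> u' < j \<Longrightarrow> p!u' < p!u"
        proof (rule ccontr)
          fix u u' assume h: "u < u'" "u' < j" "\<not> p!u' < p!u"
          have "p!u \<noteq> p!u'" by (rule NE) (use h jl in linarith)+
          then have "p!u < p!u'" using h by simp
          have "p!(j+1) < p!u" using a[of u "j+1"] h jl by auto
          have "p!u' \<noteq> m" by (rule NEm) (use h jl in linarith)+
          then have "p!u' < m" using V[of u', OF order.strict_trans[OF h(2) j(1)]] by auto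
          then show False using N1[of u u' j "j+1"] h \<open>p!u < p!u'\<close> \<open>p!(j+1) < p!u\<close> j j1 by auto
        qed
        have m4: "m \<ge> 4" using jl by auto
        note pp = par[OF me m4]
        have "\<exists>t<m. p!t = m-2" using EX[of "m-2"] m4 by simp
        then obtain w where w: "w < m" "p!w = m-2" by blast
        have p0a: "p!0 \<noteq> m" by (rule NEm) (use jl in linarith)+
        have p0b: "p!0 \<noteq> m-1" by (rule NEm1) (use iT m4 in linarith)+
        note p0 = p0a p0b
        have "w = 0"
        proof (rule ccontr)
          assume "w \<noteq> 0"
          have "w \<noteq> j" proof assume "w = j" then show False using w(2) j(2) m4 by simp qed
          have "w \<noteq> i" proof assume "w = i" then show False using w(2) i(2) m4 by simp qed
          have "p!w < p!0"
          proof (cases "w < j")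
            case True then show ?thesis using b[of 0 w] \<open>w \<noteq> 0\<close> by simp
          next
            case False then have "j < w" using \<open>w \<noteq> j\<close> by simp
            moreover have "w < m-1" using w(1) \<open>w \<noteq> i\<close> iT by presburger
            ultimately show ?thesis using a[of 0 w] jl by simp
          qed
          then show False using p0 V[of 0, OF order.strict_trans[OF jl(1) j(1)]] w m4 by auto
        qed
        then have w0: "p!0 = m-2" using w by simp
        have p1: "p!1 < m-2" using DK[of 0] w0 pp m4 by auto
        have "j \<noteq> 1" using p1 j by auto
        then have j2: "2 \<le> j" using jl by auto
        have "\<exists>t<m. p!t = m-3" using EX[of "m-3"] m4 by simp
        then obtain x where x: "x < m" "p!x = m-3" by blast
        have "x = 1"
        proof (rule ccontr)
          assume "x \<noteq> 1"
          have "x \<noteq> j" proof assume "x = j" then show False using x(2) j(2) m4 by simp qed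
          have "x \<noteq> i" proof assume "x = i" then show False using x(2) i(2) m4 by simp qed
          have "x \<noteq> 0" proof assume "x = 0" then show False using x(2) w0 m4 by simp qed
          have "p!x < p!1"
          proof (cases "x < j")
            case True then show ?thesis using b[of 1 x] \<open>x \<noteq> 0\<close> \<open>x \<noteq> 1\<close> by simp
          next
            case False then have "j < x" using \<open>x \<noteq> j\<close> by simp
            moreover have "x < m-1" using x(1) \<open>x \<noteq> i\<close> iT by presburger
            ultimately show ?thesis using a[of 1 x] j2 by simp
          qed
          then show False using p1 x by auto
        qed
        then have x1: "p!1 = m-3" using x by simp
        have e12: "(1::nat) + 1 = 2" by simp
        have "p!1 < p!2" using DK[of 1, unfolded e12] x1 pp m4 by auto
        then have "p!2 > m-3" using x1 by simp
        moreover have "p!2 \<noteq> m-2" proof - have "p!2 \<noteq> p!0" by (rule NE) (use jl j2 in linarith)+ then show ?thesis using w0 by simp qed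
        moreover have "p!2 \<noteq> m-1" by (rule NEm1) (use iT jl j2 in linarith)+
        ultimately have "p!2 = m" using V[of 2, OF order.strict_trans1[OF j2 j(1)]] m4 by auto
        then have "p!j = p!2" using j(2) by simp then have j2e: "j = 2" by (rule INJ[rotated 2]) (use j(1) jl j2 in linarith)+
        then have m6: "m \<ge> 6" using jl me by presburger
        define r where "r = take (m-4) (drop 3 p)"
        have pe: "p = [m-2, m-3, m] @ r @ [m-1]"
        proof (rule nth_equalityI)
          show "length p = length ([m-2, m-3, m] @ r @ [m-1])" using L m6 unfolding r_def by simp
          fix t assume "t < length p"
          then have "t = 0 \<or> t = 1 \<or> t = 2 \<or> (2 < t \<and> t < m-1) \<or> t = m-1" using L by arith
          then show "p!t = ([m-2, m-3, m] @ r @ [m-1])!t"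
            apply (elim disjE) using L m6 i j j2e iT w0 x1 pml unfolding r_def by (auto simp: nth_append nth_Cons')
        qed
        have "\<forall>x\<in>set r. x < m-1"
          by (rule lt_helper[of "[m-2, m-3, m]" r "[m-1]" m]) (use g(2) pe in simp, use valsp pe in simp, unfold s2, auto)
        moreover have "dk (r @ [m-1])" by (rule dk_suffix[of "[m-2, m-3, m]"]) (use g(4) pe in \<open>simp only:\<close>)
        ultimately have "dk r" using dk_prefix[of r "m-1" "[]"] by simp
        have gr: "good (m-4) r"
          by (rule comp_good[OF L g(2) g(3) g(5) g(6), of "[m-2, m-3, m]" r "[m-1]"]) (use pe m6 \<open>dk r\<close> in auto)
        have "r \<noteq> []" using L pe m6 by auto
        then have "p \<in> ?E" using pe gr by blast
        then show ?thesis by blast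
      qed
    qed
  next
    case iF: False
    have i1: "i + 1 < m" using iF i by simp
    have "p!i < p!(i+1)" using DK[OF i(1)] i pm1 iF by auto
    then have "p!(i+1) = m" using V[of "i+1", OF i1] i by auto
    then have "p!j = p!(i+1)" using j(2) by simp then have ji: "j = i+1" by (rule INJ[rotated 2]) (use j(1) i1 in linarith)+
    show ?thesis
    proof (cases "i = 0")
      case i0: True
      define q where "q = drop 2 p"
      have pe: "p = [m-1, m] @ q"
      proof (rule nth_equalityI)
        show "length p = length ([m-1, m] @ q)" using L j1 ji i0 unfolding q_def by simp
        fix t assume "t < length p"
        then have "t = 0 \<or> t = 1 \<or> 1 < t" by arith
        then show "p!t = ([m-1, m] @ q)!t"
        proof (elim disjE)
          assume "1 < t"
          then have "t = Suc (Suc (t - 2))" by arith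
          then obtain t' where t': "t = Suc (Suc t')" by blast
          have "drop 2 p ! t' = p ! (2 + t')" using L \<open>t < length p\<close> t' by (intro nth_drop) simp
          then show ?thesis unfolding q_def t' by simp
        qed (use L i j ji i0 in auto)
      qed
      have "dk q" by (rule dk_suffix[of "[m-1, m]"]) (use g(4) pe in \<open>simp only:\<close>)
      have gq: "good (m-2) q"
        by (rule comp_good[OF L g(2) g(3) g(5) g(6), of "[m-1, m]" q "[]"]) (use pe m2 \<open>dk q\<close> in auto)
      have "q \<noteq> []" using L pe j1 ji i0 by auto
      then have "p \<in> ?B" using pe gq by blast
      then show ?thesis by blast
    next
      case iF0: False
      have ea: "i + 1 + 1 = i + 2" and eb: "i + 2 + 1 = i + 3" and ec: "i + 3 + 1 = i + 4" by simp_all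
      have a: "\<And>u v. u < i \<Longrightarrow> i+1 < v \<Longrightarrow> v < m \<Longrightarrow> p!u < p!v"
      proof (rule ccontr)
        fix u v assume h: "u < i" "i+1 < v" "v < m" "\<not> p!u < p!v"
        have "p!u \<noteq> p!v" by (rule NE) (use h i(1) in linarith)+
        then have "p!v < p!u" using h by simp
        have "p!u \<noteq> m" by (rule NEm) (use h ji i(1) in linarith)+
        moreover have "p!u \<noteq> m-1" by (rule NEm1) (use h i(1) in linarith)+
        ultimately have "p!u < m-1" using V[of u, OF order.strict_trans[OF h(1) i(1)]] by auto
        then show False using N1[of u i "i+1" v] h \<open>p!v < p!u\<close> i j ji by auto
      qed
      have b: "\<And>v v'. i+1 < v \<Longrightarrow> v < v' \<Longrightarrow> v' < m \<Longrightarrow> p!v' < p!v"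
      proof (rule ccontr)
        fix v v' assume h: "i+1 < v" "v < v'" "v' < m" "\<not> p!v' < p!v"
        have "p!v \<noteq> p!v'" by (rule NE) (use h in linarith)+
        then have "p!v < p!v'" using h by simp
        have "p!0 < p!v" using a[of 0 v] h iF0 by auto
        have "p!v' \<noteq> m" by (rule NEm) (use h ji in linarith)+
        then have "p!v' < m" using V[of v', OF h(3)] by auto
        then show False using N2[of 0 "i+1" v v'] h \<open>p!v < p!v'\<close> \<open>p!0 < p!v\<close> j ji iF0 by auto
      qed
      have i2: "i+2 < m" "p!(i+2) < m" using DK[of "i+1", unfolded ea] j ji me by auto
      have m4: "m \<ge> 4" using i2 iF0 by auto
      note pp = par[OF me m4]
      have pi2: "p!(i+2) \<noteq> m-1" by (rule NEm1) (use i2 in linarith)+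
      have "\<exists>t<m. p!t = m-2" using EX[of "m-2"] m4 by simp
      then obtain w where w: "w < m" "p!w = m-2" by blast
      have "w = i+2"
      proof (rule ccontr)
        assume "w \<noteq> i+2"
        have "w \<noteq> j" proof assume "w = j" then show False using w(2) j(2) m4 by simp qed
        have "w \<noteq> i" proof assume "w = i" then show False using w(2) i(2) m4 by simp qed
        have "p!w < p!(i+2)"
        proof (cases "w < i")
          case True then show ?thesis using a[of w "i+2"] i2(1) by simp
        next
          case False then have "i+2 < w" using \<open>w \<noteq> i\<close> \<open>w \<noteq> j\<close> \<open>w \<noteq> i+2\<close> ji by presburger
          then show ?thesis using b[of "i+2" w] w(1) by simp
        qed
        then show False using pi2 i2 w by auto
      qed
      then have w2: "p!(i+2) = m-2" using w by simp
      have i3: "i+3 < m" "p!(i+3) < m-2" using DK[of "i+2", unfolded eb] w2 pp i2 by auto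
      have "\<exists>t<m. p!t = m-3" using EX[of "m-3"] m4 by simp
      then obtain x where x: "x < m" "p!x = m-3" by blast
      have "x = i+3"
      proof (rule ccontr)
        assume "x \<noteq> i+3"
        have "x \<noteq> j" proof assume "x = j" then show False using x(2) j(2) m4 by simp qed
        have "x \<noteq> i" proof assume "x = i" then show False using x(2) i(2) m4 by simp qed
        have "x \<noteq> i+2" proof assume "x = i+2" then show False using x(2) w2 m4 by simp qed
        have "p!x < p!(i+3)"
        proof (cases "x < i")
          case True then show ?thesis using a[of x "i+3"] i3(1) by simp
        next
          case False then have "i+3 < x" using \<open>x \<noteq> i\<close> \<open>x \<noteq> j\<close> \<open>x \<noteq> i+2\<close> \<open>x \<noteq> i+3\<close> ji by presburger
          then show ?thesis using b[of "i+3" x] x(1) by simp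
        qed
        then show False using i3 x by auto
      qed
      then have x3: "p!(i+3) = m-3" using x by simp
      have im: "i + 4 = m"
      proof (rule ccontr)
        assume "i + 4 \<noteq> m"
        then have "p!(i+3) < p!(i+4)" using DK[of "i+3", unfolded ec] x3 pp i3 by auto
        then have "p!(i+4) > m-3" using x3 by simp
        moreover have "p!(i+4) \<noteq> m-2" proof - have "p!(i+4) \<noteq> p!(i+2)" by (rule NE) (use i3 \<open>i + 4 \<noteq> m\<close> in linarith)+ then show ?thesis using w2 by simp qed
        moreover have "p!(i+4) \<noteq> m-1" by (rule NEm1) (use i3 \<open>i + 4 \<noteq> m\<close> in linarith)+
        moreover have "p!(i+4) \<noteq> m" by (rule NEm) (use i3 ji \<open>i + 4 \<noteq> m\<close> in linarith)+
        ultimately show False using V[of "i+4"] i3 \<open>i + 4 \<noteq> m\<close> by auto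
      qed
      define r where "r = take (m-4) p"
      have pe: "p = r @ [m-1, m, m-2, m-3]"
      proof (rule nth_equalityI)
        show "length p = length (r @ [m-1, m, m-2, m-3])" using L im unfolding r_def by simp
        fix t assume "t < length p"
        then have "t < i \<or> t = i \<or> t = i+1 \<or> t = i+2 \<or> t = i+3" using L im by arith
        then show "p!t = (r @ [m-1, m, m-2, m-3])!t"
          apply (elim disjE) using L im i j ji w2 x3 unfolding r_def by (auto simp: nth_append nth_Cons')
      qed
      have "\<forall>x\<in>set r. x < m-1"
        by (rule lt_helper[of "[]" r "[m-1, m, m-2, m-3]" m]) (use g(2) pe in simp, use valsp pe in simp, unfold s2, auto)
      then have "dk r" using dk_prefix[of r "m-1" "[m, m-2, m-3]"] g(4) pe by simp
      have gr: "good (m-4) r"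
        by (rule comp_good[OF L g(2) g(3) g(5) g(6), of "[]" r "[m-1, m, m-2, m-3]"]) (use pe m4 \<open>dk r\<close> in auto)
      have "r \<noteq> []" using iF0 im unfolding r_def using L by auto
      then have "p \<in> ?D" using pe gr by blast
      then show ?thesis by blast
    qed
  qed
qed




lemma good_finite: "finite {p. good k p}"
proof -
  have "{p. good k p} \<subseteq> {xs. set xs \<subseteq> {1..k} \<and> length xs = k}" unfolding good_def by auto
  moreover have "finite {xs. set xs \<subseteq> {1..k} \<and> length xs = k}"
    by (rule finite_lists_length_eq) simp
  ultimately show ?thesis using finite_subset by blast
qed

lemma good0: "{p. good 0 p} = {[]}"
proof -
  have "good 0 []" unfolding good_def P1_def P2_def by simp
  moreover have "good 0 p \<Longrightarrow> p = []" for p unfolding good_def by simp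
  ultimately show ?thesis by blast
qed

lemma good_ne_pos: "good k p \<Longrightarrow> p \<noteq> [] \<Longrightarrow> k \<ge> 1"
  unfolding good_def by (cases p) auto

lemma good_pos_ne: "good k p \<Longrightarrow> k \<ge> 1 \<Longrightarrow> p \<noteq> []"
  unfolding good_def by auto

lemma good_inj: "good m x \<Longrightarrow> a < m \<Longrightarrow> b < m \<Longrightarrow> x!a = x!b \<Longrightarrow> a = b"
  unfolding good_def using nth_eq_iff_index_eq[of x a b] by simp

lemma setEq:
  fixes m :: nat
  assumes me: "even m" and m2: "m \<ge> 2"
  shows "{p. good m p} = (\<lambda>q. q @ [m, m-1]) ` {q. good (m-2) q}
       \<union> (\<lambda>q. [m-1, m] @ q) ` {q. good (m-2) q \<and> q \<noteq> []}
       \<union> (\<lambda>q. m # q @ [m-1]) ` {q. good (m-2) q \<and> q \<noteq> []}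
       \<union> (\<lambda>r. r @ [m-1, m, m-2, m-3]) ` {r. good (m-4) r \<and> r \<noteq> []}
       \<union> (\<lambda>r. [m-2, m-3, m] @ r @ [m-1]) ` {r. good (m-4) r \<and> r \<noteq> []}"
  (is "?L = ?A \<union> ?B \<union> ?C \<union> ?D \<union> ?E")
proof
  show "?L \<subseteq> ?A \<union> ?B \<union> ?C \<union> ?D \<union> ?E"
  proof
    fix p assume "p \<in> ?L"
    then have "good m p" by simp
    then show "p \<in> ?A \<union> ?B \<union> ?C \<union> ?D \<union> ?E" by (rule forward[OF _ me m2])
  qed
next
  have mm: "m = (m - 2) + 2" using m2 by simp
  have A: "?A \<subseteq> ?L"
  proof
    fix x assume "x \<in> ?A"
    then obtain q where q: "x = q @ [m, m-1]" "good (m-2) q" by auto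
    show "x \<in> ?L" using f1_good[OF q(2) me mm] q(1) by simp
  qed
  have B: "?B \<subseteq> ?L"
  proof
    fix x assume "x \<in> ?B"
    then obtain q where q: "x = [m-1, m] @ q" "good (m-2) q" "q \<noteq> []" by auto
    show "x \<in> ?L" using f2_good[OF q(2) me mm q(3)] q(1) by simp
  qed
  have C: "?C \<subseteq> ?L"
  proof
    fix x assume "x \<in> ?C"
    then obtain q where q: "x = m # q @ [m-1]" "good (m-2) q" "q \<noteq> []" by auto
    show "x \<in> ?L" using f3_good[OF q(2) me mm q(3)] q(1) by simp
  qed
  have D: "?D \<subseteq> ?L"
  proof
    fix x assume "x \<in> ?D"
    then obtain r where r: "good (m-4) r" "r \<noteq> []" "x = r @ [m-1, m, m-2, m-3]" by auto
    have "m - 4 \<ge> 1" using good_ne_pos[OF r(1,2)] .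
    then have "m = (m-4) + 4" by simp
    then show "x \<in> ?L" using g1_good[OF r(1) me _ r(2)] r(3) by simp
  qed
  have E: "?E \<subseteq> ?L"
  proof
    fix x assume "x \<in> ?E"
    then obtain r where r: "good (m-4) r" "r \<noteq> []" "x = [m-2, m-3, m] @ r @ [m-1]" by auto
    have "m - 4 \<ge> 1" using good_ne_pos[OF r(1,2)] .
    then have "m = (m-4) + 4" by simp
    then show "x \<in> ?L" using g2_good[OF r(1) me _ r(2)] r(3) by simp
  qed
  show "?A \<union> ?B \<union> ?C \<union> ?D \<union> ?E \<subseteq> ?L" using A B C D E by (simp only: Un_subset_iff)
qed




lemma card_step:
  fixes m :: nat
  assumes me: "even m" and m2: "m \<ge> 2"
  shows "card {p. good m p} = card {q. good (m-2) q} + 2 * card {q. good (m-2) q \<and> q \<noteq> []}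
           + 2 * card {r. good (m-4) r \<and> r \<noteq> []}"
proof -
  let ?A = "(\<lambda>q. q @ [m, m-1]) ` {q. good (m-2) q}"
  let ?B = "(\<lambda>q. [m-1, m] @ q) ` {q. good (m-2) q \<and> q \<noteq> []}"
  let ?C = "(\<lambda>q. m # q @ [m-1]) ` {q. good (m-2) q \<and> q \<noteq> []}"
  let ?D = "(\<lambda>r. r @ [m-1, m, m-2, m-3]) ` {r. good (m-4) r \<and> r \<noteq> []}"
  let ?E = "(\<lambda>r. [m-2, m-3, m] @ r @ [m-1]) ` {r. good (m-4) r \<and> r \<noteq> []}"
  let ?L = "{p. good m p}"
  have SE: "?L = ?A \<union> ?B \<union> ?C \<union> ?D \<union> ?E" by (rule setEq[OF me m2])
  have fin1: "finite {q. good (m-2) q \<and> q \<noteq> []}" using good_finite[of "m-2"] by (rule finite_subset[rotated]) auto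
  have fin2: "finite {q. good (m-4) q \<and> q \<noteq> []}" using good_finite[of "m-4"] by (rule finite_subset[rotated]) auto
  have cA: "card ?A = card {q. good (m-2) q}" by (rule card_image) (auto simp: inj_on_def)
  have cB: "card ?B = card {q. good (m-2) q \<and> q \<noteq> []}" by (rule card_image) (auto simp: inj_on_def)
  have cC: "card ?C = card {q. good (m-2) q \<and> q \<noteq> []}" by (rule card_image) (auto simp: inj_on_def)
  have cD: "card ?D = card {q. good (m-4) q \<and> q \<noteq> []}" by (rule card_image) (auto simp: inj_on_def)
  have cE: "card ?E = card {q. good (m-4) q \<and> q \<noteq> []}" by (rule card_image) (auto simp: inj_on_def)
  have fA: "finite ?A" using good_finite by simp
  have fB: "finite ?B" using fin1 by simp
  have fC: "finite ?C" using fin1 by simp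
  have fD: "finite ?D" using fin2 by simp
  have fE: "finite ?E" using fin2 by simp
  have INJ: "a = b" if "x \<in> ?L" "a < m" "b < m" "x!a = m" "x!b = m" for x a b
    using good_inj[of m x a b] that by simp
  have PA: "x!(m-2) = m" if xin: "x \<in> ?A" for x
  proof -
    obtain q where q: "x = q @ [m, m-1]" "good (m-2) q" using xin by auto
    have "length q = m - 2" using q(2) unfolding good_def by simp
    then show ?thesis using q(1) by (simp add: nth_append)
  qed
  have PB: "x!1 = m \<and> m \<ge> 4" if xin: "x \<in> ?B" for x
  proof -
    obtain q where q: "x = [m-1, m] @ q" "good (m-2) q" "q \<noteq> []" using xin by auto
    have "m - 2 \<ge> 1" using good_ne_pos[OF q(2,3)] .
    then have "m \<ge> 4" using me by presburger
    then show ?thesis using q(1) by simp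
  qed
  have PC: "x!0 = m \<and> m \<ge> 4" if xin: "x \<in> ?C" for x
  proof -
    obtain q where q: "x = m # q @ [m-1]" "good (m-2) q" "q \<noteq> []" using xin by auto
    have "m - 2 \<ge> 1" using good_ne_pos[OF q(2,3)] .
    then have "m \<ge> 4" using me by presburger
    then show ?thesis using q(1) by simp
  qed
  have PD: "x!(m-3) = m \<and> m \<ge> 6" if xin: "x \<in> ?D" for x
  proof -
    obtain q where q: "x = q @ [m-1, m, m-2, m-3]" "good (m-4) q" "q \<noteq> []" using xin by auto
    have "m - 4 \<ge> 1" using good_ne_pos[OF q(2,3)] .
    then have m6: "m \<ge> 6" using me by presburger
    have "length q = m - 4" using q(2) unfolding good_def by simp
    moreover have "m - 3 = (m - 4) + 1" using m6 by simp
    ultimately have "x!(m-3) = [m-1, m, m-2, m-3] ! 1" using q(1) by (simp add: nth_append)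
    then show ?thesis using m6 by simp
  qed
  have PE: "x!2 = m \<and> m \<ge> 6" if xin: "x \<in> ?E" for x
  proof -
    obtain q where q: "x = [m-2, m-3, m] @ q @ [m-1]" "good (m-4) q" "q \<noteq> []" using xin by auto
    have "m - 4 \<ge> 1" using good_ne_pos[OF q(2,3)] .
    then have "m \<ge> 6" using me by presburger
    then show ?thesis using q(1) by simp
  qed
  have LA: "?A \<subseteq> ?L" "?B \<subseteq> ?L" "?C \<subseteq> ?L" "?D \<subseteq> ?L" "?E \<subseteq> ?L" using SE by blast+
  have dAB: "?A \<inter> ?B = {}"
  proof (rule ccontr)
    assume "?A \<inter> ?B \<noteq> {}" then obtain x where x: "x \<in> ?A" "x \<in> ?B" by blast
    have "m - 2 = 1" using INJ[of x "m-2" 1] PA[OF x(1)] PB[OF x(2)] LA x by auto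
    then show False using PB[OF x(2)] by auto
  qed
  have dAC: "?A \<inter> ?C = {}"
  proof (rule ccontr)
    assume "?A \<inter> ?C \<noteq> {}" then obtain x where x: "x \<in> ?A" "x \<in> ?C" by blast
    have "m - 2 = 0" using INJ[of x "m-2" 0] PA[OF x(1)] PC[OF x(2)] LA x by auto
    then show False using PC[OF x(2)] by auto
  qed
  have dAD: "?A \<inter> ?D = {}"
  proof (rule ccontr)
    assume "?A \<inter> ?D \<noteq> {}" then obtain x where x: "x \<in> ?A" "x \<in> ?D" by blast
    have "m - 2 = m - 3" using INJ[of x "m-2" "m-3"] PA[OF x(1)] PD[OF x(2)] LA x by auto
    then show False using PD[OF x(2)] by auto
  qed
  have dAE: "?A \<inter> ?E = {}"
  proof (rule ccontr)
    assume "?A \<inter> ?E \<noteq> {}" then obtain x where x: "x \<in> ?A" "x \<in> ?E" by blast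
    have "m - 2 = 2" using INJ[of x "m-2" 2] PA[OF x(1)] PE[OF x(2)] LA x by auto
    then show False using PE[OF x(2)] by auto
  qed
  have dBC: "?B \<inter> ?C = {}"
  proof (rule ccontr)
    assume "?B \<inter> ?C \<noteq> {}" then obtain x where x: "x \<in> ?B" "x \<in> ?C" by blast
    have "(1::nat) = 0" using INJ[of x 1 0] PB[OF x(1)] PC[OF x(2)] LA x by auto
    then show False by simp
  qed
  have dBD: "?B \<inter> ?D = {}"
  proof (rule ccontr)
    assume "?B \<inter> ?D \<noteq> {}" then obtain x where x: "x \<in> ?B" "x \<in> ?D" by blast
    have "1 = m - 3" using INJ[of x 1 "m-3"] PB[OF x(1)] PD[OF x(2)] LA x by auto
    then show False using PD[OF x(2)] by auto
  qed
  have dBE: "?B \<inter> ?E = {}"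
  proof (rule ccontr)
    assume "?B \<inter> ?E \<noteq> {}" then obtain x where x: "x \<in> ?B" "x \<in> ?E" by blast
    have "(1::nat) = 2" using INJ[of x 1 2] PB[OF x(1)] PE[OF x(2)] LA x by auto
    then show False by simp
  qed
  have dCD: "?C \<inter> ?D = {}"
  proof (rule ccontr)
    assume "?C \<inter> ?D \<noteq> {}" then obtain x where x: "x \<in> ?C" "x \<in> ?D" by blast
    have "0 = m - 3" using INJ[of x 0 "m-3"] PC[OF x(1)] PD[OF x(2)] LA x by auto
    then show False using PD[OF x(2)] by auto
  qed
  have dCE: "?C \<inter> ?E = {}"
  proof (rule ccontr)
    assume "?C \<inter> ?E \<noteq> {}" then obtain x where x: "x \<in> ?C" "x \<in> ?E" by blast
    have "(0::nat) = 2" using INJ[of x 0 2] PC[OF x(1)] PE[OF x(2)] LA x by auto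
    then show False by simp
  qed
  have dDE: "?D \<inter> ?E = {}"
  proof (rule ccontr)
    assume "?D \<inter> ?E \<noteq> {}" then obtain x where x: "x \<in> ?D" "x \<in> ?E" by blast
    have "m - 3 = 2" using INJ[of x "m-3" 2] PD[OF x(1)] PE[OF x(2)] LA x by auto
    then show False using PE[OF x(2)] by auto
  qed
  have f4: "finite (?A \<union> ?B \<union> ?C \<union> ?D)" using fA fB fC fD by (simp only: finite_Un)
  have f3: "finite (?A \<union> ?B \<union> ?C)" using fA fB fC by (simp only: finite_Un)
  have f2: "finite (?A \<union> ?B)" using fA fB by (simp only: finite_Un)
  have i4: "(?A \<union> ?B \<union> ?C \<union> ?D) \<inter> ?E = {}" by (simp only: Int_Un_distrib2 dAE dBE dCE dDE Un_empty_left)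
  have i3: "(?A \<union> ?B \<union> ?C) \<inter> ?D = {}" by (simp only: Int_Un_distrib2 dAD dBD dCD Un_empty_left)
  have i2: "(?A \<union> ?B) \<inter> ?C = {}" by (simp only: Int_Un_distrib2 dAC dBC Un_empty_left)
  have "card (?A \<union> ?B \<union> ?C \<union> ?D \<union> ?E) = card (?A \<union> ?B \<union> ?C \<union> ?D) + card ?E"
    by (rule card_Un_disjoint[OF f4 fE i4])
  also have "card (?A \<union> ?B \<union> ?C \<union> ?D) = card (?A \<union> ?B \<union> ?C) + card ?D"
    by (rule card_Un_disjoint[OF f3 fD i3])
  also have "card (?A \<union> ?B \<union> ?C) = card (?A \<union> ?B) + card ?C"
    by (rule card_Un_disjoint[OF f2 fC i2])
  also have "card (?A \<union> ?B) = card ?A + card ?B"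
    by (rule card_Un_disjoint[OF fA fB dAB])
  finally have "card (?A \<union> ?B \<union> ?C \<union> ?D \<union> ?E) = card ?A + card ?B + card ?C + card ?D + card ?E" .
  then have "card ?L = card ?A + card ?B + card ?C + card ?D + card ?E" by (simp only: SE)
  then show ?thesis by (simp only: cA cB cC cD cE)
qed




definition acount :: "nat \<Rightarrow> nat" where "acount n = card {p. good (2*n) p}"
definition ccount :: "nat \<Rightarrow> nat" where "ccount n = card {p. good (2*n) p \<and> p \<noteq> []}"

lemma c_eq: "ccount n = (if n = 0 then 0 else acount n)"
proof (cases "n = 0")
  case True
  have E0: "{p. good (2*n) p \<and> p \<noteq> []} = {}" using good0 True by auto
  show ?thesis unfolding ccount_def E0 using True by simp
next
  case False
  have "{p. good (2*n) p \<and> p \<noteq> []} = {p. good (2*n) p}" using good_pos_ne[of "2*n"] False by auto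
  then show ?thesis unfolding ccount_def acount_def using False by simp
qed

lemma a0: "acount 0 = 1"
  unfolding acount_def using good0 by simp

lemma a_rec: assumes "n \<ge> 1" shows "acount n = acount (n-1) + 2 * ccount (n-1) + 2 * ccount (n-2)"
proof -
  have e1: "2*n - 2 = 2*(n-1)" and e2: "2*n - 4 = 2*(n-2)" by arith+
  have "even (2*n)" by simp
  moreover have "2*n \<ge> 2" using assms by simp
  ultimately have "card {p. good (2*n) p} = card {q. good (2*n-2) q} + 2 * card {q. good (2*n-2) q \<and> q \<noteq> []}
           + 2 * card {r. good (2*n-4) r \<and> r \<noteq> []}" by (rule card_step)
  then show ?thesis unfolding acount_def ccount_def e1 e2 .
qed

lemma c1: "ccount 1 = 1"
  using a_rec[of 1] a0 c_eq[of 1] c_eq[of 0] by simp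

lemma c_rec: "ccount (n+2) = 3 * ccount (n+1) + 2 * ccount n"
  using a_rec[of "n+2"] c_eq[of "n+2"] c_eq[of "n+1"] by simp

definition phi :: real where "phi = (3 + sqrt 17) / 2"
definition psi :: real where "psi = (3 - sqrt 17) / 2"

lemma phi2: "phi^2 = 3 * phi + 2"
proof -
  have s: "sqrt 17 * sqrt 17 = (17::real)" by simp
  show ?thesis unfolding phi_def power2_eq_square by (simp add: field_simps s)
qed

lemma psi2: "psi^2 = 3 * psi + 2"
proof -
  have s: "sqrt 17 * sqrt 17 = (17::real)" by simp
  show ?thesis unfolding psi_def power2_eq_square by (simp add: field_simps s)
qed

definition Fr :: "nat \<Rightarrow> real" where "Fr n = (phi^n - psi^n) / sqrt 17"

lemma Fr_rec: "Fr (n+2) = 3 * Fr (n+1) + 2 * Fr n"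
proof -
  have "phi^(n+2) = phi^n * (3*phi+2)" using phi2 by (simp add: power_add power2_eq_square)
  then have a: "phi^(n+2) = 3 * phi^(n+1) + 2 * phi^n" by (simp add: algebra_simps)
  have "psi^(n+2) = psi^n * (3*psi+2)" using psi2 by (simp add: power_add power2_eq_square)
  then have b: "psi^(n+2) = 3 * psi^(n+1) + 2 * psi^n" by (simp add: algebra_simps)
  show ?thesis unfolding Fr_def a b by (simp add: field_simps)
qed

lemma Fr0: "Fr 0 = 0" unfolding Fr_def by simp
lemma Fr1: "Fr 1 = 1"
proof -
  have "phi - psi = sqrt 17" unfolding phi_def psi_def by (simp add: field_simps)
  then show ?thesis unfolding Fr_def by simp
qed

lemma c_Fr: "real (ccount n) = Fr n \<and> real (ccount (n+1)) = Fr (n+1)"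
proof (induction n)
  case 0
  show ?case using c_eq[of 0] c1 Fr0 Fr1 by simp
next
  case (Suc n)
  have "real (ccount (n+2)) = 3 * real (ccount (n+1)) + 2 * real (ccount n)" using c_rec[of n] by simp
  also have "\<dots> = Fr (n+2)" using Suc Fr_rec[of n] by simp
  finally show ?case using Suc by simp
qed




theorem theorem3p7:
  fixes n :: nat
  assumes "n \<ge> 1"
  shows "real (card (Dumont1_avoid n {[2,3,4,1], [1,4,2,3]})) =
           (1 / sqrt 17) * (((3 + sqrt 17) / 2) ^ n - ((3 - sqrt 17) / 2) ^ n)
       \<and> int (card (Dumont1_avoid n {[2,3,4,1], [1,4,2,3]})) =
           round ((1 / sqrt 17) * ((3 + sqrt 17) / 2) ^ n)"
proof -
  have cd: "card (Dumont1_avoid n {[2,3,4,1], [1,4,2,3]}) = ccount n"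
    unfolding D_good using c_eq[of n] assms unfolding acount_def by simp
  have r: "real (ccount n) = Fr n" using c_Fr by blast
  have s4: "4 < sqrt (17::real)" by (rule real_less_rsqrt) simp
  have s5: "sqrt (17::real) < 5" by (rule real_less_lsqrt) simp_all
  have d: "\<And>x::real. x/2 \<le> 1 \<longleftrightarrow> x \<le> 2" by auto
  have p1: "\<bar>psi\<bar> \<le> 1" unfolding psi_def abs_le_iff minus_divide_left d using s4 s5 by linarith
  have pn: "\<bar>psi ^ n\<bar> \<le> 1" unfolding power_abs by (rule power_le_one) (simp, rule p1)
  have part1: "real (ccount n) = (1 / sqrt 17) * (phi ^ n - psi ^ n)" using r unfolding Fr_def by simp
  have diff: "(1 / sqrt 17) * phi ^ n - real (ccount n) = psi ^ n / sqrt 17"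
    unfolding part1 by (simp add: diff_divide_distrib)
  have "\<bar>psi ^ n / sqrt 17\<bar> = \<bar>psi ^ n\<bar> / sqrt 17" by (simp add: abs_divide)
  also have "\<dots> \<le> 1 / sqrt 17" by (rule divide_right_mono[OF pn]) simp
  also have "\<dots> < 1/2" by (rule divide_strict_left_mono) (use s4 in auto)
  finally have lt: "\<bar>psi ^ n / sqrt 17\<bar> < 1/2" .
  have "(1 / sqrt 17) * phi ^ n - of_int (int (ccount n)) = psi ^ n / sqrt 17" using diff by simp
  then have "\<bar>(1 / sqrt 17) * phi ^ n - of_int (int (ccount n))\<bar> < 1/2" using lt by simp
  then have part2: "round ((1 / sqrt 17) * phi ^ n) = int (ccount n)" by (rule round_unique')
  have A: "real (ccount n) = (1 / sqrt 17) * (((3 + sqrt 17) / 2) ^ n - ((3 - sqrt 17) / 2) ^ n)"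
    using part1 unfolding phi_def psi_def .
  have B: "int (ccount n) = round ((1 / sqrt 17) * ((3 + sqrt 17) / 2) ^ n)"
    using part2 unfolding phi_def by (rule sym)
  show ?thesis unfolding cd using A B by (rule conjI)
qed


end
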